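(* Let $\mathcal{N}^g=\{n: T(n)\in\mathcal{G}\}$ be the target set. Then LevinTS run with policy $\pi$ satisfies $$N(\mathrm{LevinTS},\mathcal{N}^g)\le \min_{n\in\mathcal{N}^g}\frac{\ell(n)}{\pi(n)},$$ where $N(\mathrm{LevinTS},\mathcal{N}^g)$ is the number of node selections made by LevinTS up to and including the first selected node belonging to $\mathcal{N}^g$.
   Context: Setting: a finite action set $\mathcal{A}$, a set of states $\mathcal{S}$ with initial state $s_0$, a deterministic transition function $T:\mathcal{S}\times\mathcal{A}\to\mathcal{S}$, and a set of goal states $\mathcal{G}\subseteq\mathcal{S}$. Nodes are finite sequences of actions; the root $n_0$ is the empty sequence; $T(n)$ is the state reached from $s_0$ by applying the actions of $n$ in order; the children of $n$ are $na$, $a\in\mathcal{A}$. For a node $n$ consisting of $t$ actions, $\ell(n):=t+1$. A policy is a function $\pi$ from nodes to $[0,1]$ with $\pi(n_0)=1$ and $\pi(n)=\sum_{a\in\mathcal{A}}\pi(na)$; $\pi(a\mid n)=\pi(na)/\pi(n)$; $\ell(n)/\pi(n)=+\infty$ if $\pi(n)=0$. The policy is Markovian if $\pi(a\mid n_1)=\pi(a\mid n_2)$ whenever $T(n_1)=T(n_2)$. LevinTS: maintain a frontier $\mathcal{F}$, initially $\{n_0\}$, and a record set $\mathcal{V}$, initially $\emptyset$. While $\mathcal{F}\neq\emptyset$: remove from $\mathcal{F}$ a node $n$ minimizing $\ell(n)/\pi(n)$ (this counts as one node selection/expansion); if $T(n)\in\mathcal{G}$, stop with success; if $\pi$ is Markovian,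 then if there is $n'\in\mathcal{V}$ with $T(n')=T(n)$ and $\pi(n')\ge\pi(n)$, skip to the next iteration (state cut), and otherwise add $n$ to $\mathcal{V}$; finally add all children of $n$ to $\mathcal{F}$. *)

theory Defs
  imports Complex_Main "HOL-Library.Extended_Real"
begin

text \<open>Nodes are action lists (actions applied in order from the root).
  The state reached by a node: apply the actions of n in order from s0.\<close>
definition node_state :: "('s \<Rightarrow> 'a \<Rightarrow> 's) \<Rightarrow> 's \<Rightarrow> 'a list \<Rightarrow> 's" where
  "node_state T s0 n = fold (\<lambda>a s. T s a) n s0"

definition node_len :: "'a list \<Rightarrow> nat" where
  "node_len n = length n + 1"

definition is_policy :: "('a::finite list \<Rightarrow> real) \<Rightarrow> bool" where
  "is_policy \<pi> \<longleftrightarrow> \<pi> [] = 1 \<and> (\<forall>n. 0 \<le> \<pi> n \<and> \<pi> n \<le> 1)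
     \<and> (\<forall>n. \<pi> n = (\<Sum>a\<in>UNIV. \<pi> (n @ [a])))"

definition cond_pol :: "('a list \<Rightarrow> real) \<Rightarrow> 'a \<Rightarrow> 'a list \<Rightarrow> real" where
  "cond_pol \<pi> a n = \<pi> (n @ [a]) / \<pi> n"

definition markovian :: "('s \<Rightarrow> 'a \<Rightarrow> 's) \<Rightarrow> 's \<Rightarrow> ('a list \<Rightarrow> real) \<Rightarrow> bool" where
  "markovian T s0 \<pi> \<longleftrightarrow> (\<forall>n1 n2 a. node_state T s0 n1 = node_state T s0 n2 \<longrightarrow>
       cond_pol \<pi> a n1 = cond_pol \<pi> a n2)"

definition levin_cost :: "('a list \<Rightarrow> real) \<Rightarrow> 'a list \<Rightarrow> ereal" where
  "levin_cost \<pi> n = (if \<pi> n = 0 then \<infinity> else ereal (real (node_len n) / \<pi> n))"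

text \<open>A configuration: (frontier F, record set V, stopped-with-success flag).
  sel k F is the node selected at iteration k (tie-breaking rule).\<close>
definition levin_step ::
  "('s \<Rightarrow> 'a::finite \<Rightarrow> 's) \<Rightarrow> 's \<Rightarrow> 's set \<Rightarrow> ('a list \<Rightarrow> real)
   \<Rightarrow> (nat \<Rightarrow> 'a list set \<Rightarrow> 'a list) \<Rightarrow> nat
   \<Rightarrow> 'a list set \<times> 'a list set \<times> bool \<Rightarrow> 'a list set \<times> 'a list set \<times> bool" where
  "levin_step T s0 G \<pi> sel k c =
     (case c of (F, V, stop) \<Rightarrow>
       if stop \<or> F = {} then (F, V, stop)
       else (let n = sel k F; F' = F - {n} in
         if node_state T s0 n \<in> G then (F', V, True)
         else if markovian T s0 \<pi> \<and>
                 (\<exists>n'\<in>V. node_state T s0 n' = node_state T s0 n \<and> \<pi> n' \<ge> \<pi> n)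
         then (F', V, False)
         else (F' \<union> {n @ [a] | a. True},
               (if markovian T s0 \<pi> then V \<union> {n} else V), False)))"

fun levin_run ::
  "('s \<Rightarrow> 'a::finite \<Rightarrow> 's) \<Rightarrow> 's \<Rightarrow> 's set \<Rightarrow> ('a list \<Rightarrow> real)
   \<Rightarrow> (nat \<Rightarrow> 'a list set \<Rightarrow> 'a list) \<Rightarrow> nat \<Rightarrow> 'a list set \<times> 'a list set \<times> bool" where
  "levin_run T s0 G \<pi> sel 0 = ({[]}, {}, False)"
| "levin_run T s0 G \<pi> sel (Suc k) = levin_step T s0 G \<pi> sel k (levin_run T s0 G \<pi> sel k)"

text \<open>Number of node selections up to and including the first selected goal node
  (infinity if no goal node is ever selected). Success is recorded after
  selection number k+1 exactly when the stop flag first becomes true at run index k+1.\<close>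
definition levin_N ::
  "('s \<Rightarrow> 'a::finite \<Rightarrow> 's) \<Rightarrow> 's \<Rightarrow> 's set \<Rightarrow> ('a list \<Rightarrow> real)
   \<Rightarrow> (nat \<Rightarrow> 'a list set \<Rightarrow> 'a list) \<Rightarrow> ereal" where
  "levin_N T s0 G \<pi> sel =
     (if \<exists>k. snd (snd (levin_run T s0 G \<pi> sel k))
      then ereal (real (LEAST k. snd (snd (levin_run T s0 G \<pi> sel k))))
      else \<infinity>)"

definition valid_choice :: "('a list \<Rightarrow> real) \<Rightarrow> (nat \<Rightarrow> 'a list set \<Rightarrow> 'a list) \<Rightarrow> bool" where
  "valid_choice \<pi> sel \<longleftrightarrow> (\<forall>k F. finite F \<and> F \<noteq> {} \<longrightarrow>
      sel k F \<in> F \<and> (\<forall>m\<in>F. levin_cost \<pi> (sel k F) \<le> levin_cost \<pi> m))"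

end

theory Submission imports Defs begin

locale lts =
  fixes T :: "'s \<Rightarrow> 'a::finite \<Rightarrow> 's" and s0 :: 's and G :: "'s set"
    and \<pi> :: "'a list \<Rightarrow> real" and sel :: "nat \<Rightarrow> 'a list set \<Rightarrow> 'a list"
  assumes pol: "is_policy \<pi>" and vc: "valid_choice \<pi> sel"
begin

abbreviation st where "st n \<equiv> node_state T s0 n"
abbreviation mk where "mk \<equiv> markovian T s0 \<pi>"
abbreviation cost where "cost \<equiv> levin_cost \<pi>"
definition dm where "dm y x \<longleftrightarrow> st y = st x \<and> \<pi> x \<le> \<pi> y \<and> 0 < \<pi> x \<and>
   real (node_len y) * \<pi> x \<le> real (node_len x) * \<pi> y"

lemma st_app: "st (x@s) = fold (\<lambda>a s. T s a) s (st x)" by (simp add: node_state_def)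

lemma pnn: "0 \<le> \<pi> n" using pol unfolding is_policy_def by blast
lemma psum: "\<pi> n = (\<Sum>a\<in>UNIV. \<pi> (n@[a]))" using pol unfolding is_policy_def by blast
lemma proot: "\<pi> [] = 1" using pol unfolding is_policy_def by blast
lemma pchild: "\<pi> (n@[a]) \<le> \<pi> n"
proof -
  have "\<pi> (n@[a]) \<le> (\<Sum>b\<in>UNIV. \<pi> (n@[b]))"
    by (rule member_le_sum) (auto simp: pnn)
  then show ?thesis using psum[of n] by linarith
qed

lemma pmono: "\<pi> (n@t) \<le> \<pi> n"
proof (induction t rule: rev_induct)
  case Nil then show ?case by simp
next
  case (snoc a t) then show ?case using pchild[of "n@t" a] by simp
qed

lemma finlen: "finite {t::'a list. length t = n}"
  using finite_lists_length_eq[of "UNIV::'a set" n] by simp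

lemma pext: "\<pi> n = (\<Sum>t\<in>{t. length t = k}. \<pi> (n@t))"
proof (induction k)
  case 0 then show ?case by simp
next
  case (Suc k)
  have eq: "{t::'a list. length t = Suc k} = (\<lambda>(t,a). t@[a]) ` ({t. length t = k} \<times> UNIV)"
  proof (rule set_eqI, rule iffI)
    fix t :: "'a list" assume "t \<in> {t. length t = Suc k}"
    then have "t \<noteq> []" "length (butlast t) = k" by auto
    then have "t = (\<lambda>(t,a). t@[a]) (butlast t, last t)" by simp
    then show "t \<in> (\<lambda>(t,a). t@[a]) ` ({t. length t = k} \<times> UNIV)"
      using \<open>length (butlast t) = k\<close> by blast
  next
    fix t :: "'a list" assume "t \<in> (\<lambda>(t,a). t@[a]) ` ({t. length t = k} \<times> UNIV)"
    then show "t \<in> {t. length t = Suc k}" by auto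
  qed
  have inj: "inj_on (\<lambda>(t,a). t@[a]) ({t::'a list. length t = k} \<times> (UNIV::'a set))"
    by (auto simp: inj_on_def)
  have "(\<Sum>t\<in>{t. length t = Suc k}. \<pi> (n@t)) = (\<Sum>p\<in>{t. length t = k} \<times> UNIV. \<pi> (n@fst p@[snd p]))"
    unfolding eq sum.reindex[OF inj] by (rule sum.cong) auto
  also have "\<dots> = (\<Sum>t\<in>{t. length t = k}. \<Sum>a\<in>UNIV. \<pi> (n@t@[a]))"
    by (subst sum.cartesian_product) (simp add: case_prod_beta)
  also have "\<dots> = (\<Sum>t\<in>{t. length t = k}. \<pi> (n@t))"
  proof (rule sum.cong)
    fix t show "(\<Sum>a\<in>UNIV. \<pi> (n@t@[a])) = \<pi> (n@t)"
      using psum[of "n@t"] by simp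
  qed simp
  finally show ?case using Suc by simp
qed

lemma antichain:
  assumes fin: "finite L" and ac: "\<forall>y\<in>L. \<forall>z\<in>L. (\<exists>t. z = y@t) \<longrightarrow> z = y"
  shows "(\<Sum>y\<in>L. \<pi> y) \<le> 1"
proof (cases "L = {}")
  case True then show ?thesis by simp
next
  case False
  define D where "D = Max (length ` L)"
  have leD: "y \<in> L \<Longrightarrow> length y \<le> D" for y unfolding D_def using fin by auto
  define h where "h = (\<lambda>(y::'a list,t::'a list). y@t)"
  define Sg where "Sg = Sigma L (\<lambda>y. {t::'a list. length t = D - length y})"
  have finS: "finite Sg" unfolding Sg_def using fin by (auto intro!: finite_SigmaI finlen)
  have inj: "inj_on h Sg"
  proof (rule inj_onI)
    fix p q assume p: "p \<in> Sg" and q: "q \<in> Sg" and e: "h p = h q"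
    obtain y t where pyt: "p = (y,t)" by fastforce
    obtain y' t' where qyt: "q = (y',t')" by fastforce
    have yL: "y \<in> L" "y' \<in> L" using p q pyt qyt Sg_def by auto
    have "y@t = y'@t'" using e pyt qyt h_def by simp
    then obtain us where "(y = y'@us \<and> us@t = t') \<or> (y@us = y' \<and> t = us@t')"
      by (auto simp: append_eq_append_conv2)
    then have "y = y'" using ac yL by metis
    then show "p = q" using \<open>y@t = y'@t'\<close> pyt qyt by simp
  qed
  have "(\<Sum>y\<in>L. \<pi> y) = (\<Sum>y\<in>L. \<Sum>t\<in>{t. length t = D - length y}. \<pi> (y@t))"
    by (rule sum.cong) (auto simp: pext[symmetric])
  also have "\<dots> = (\<Sum>p\<in>Sg. \<pi> (h p))"
    unfolding Sg_def h_def using fin by (subst sum.Sigma) (auto intro: finlen sum.cong simp: case_prod_beta)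
  also have "\<dots> = (\<Sum>z\<in>h ` Sg. \<pi> z)" by (simp add: sum.reindex[OF inj])
  also have "\<dots> \<le> (\<Sum>z\<in>{t. length t = D}. \<pi> z)"
  proof (rule sum_mono2)
    show "finite {t::'a list. length t = D}" by (rule finlen)
    show "h ` Sg \<subseteq> {t. length t = D}" unfolding Sg_def h_def using leD by auto
  qed (simp add: pnn)
  also have "\<dots> = 1" using pext[of "[]" D] proot by simp
  finally show ?thesis .
qed

lemma counting:
  assumes fin: "finite A" and c0: "0 \<le> c"
    and h: "\<forall>y\<in>A. real (node_len y) \<le> c * \<pi> y"
  shows "real (card A) \<le> c"
proof -
  define L where "L = {y\<in>A. \<forall>z\<in>A. (\<exists>t. z = y@t) \<longrightarrow> z = y}"
  define P where "P y = (\<lambda>i. take i y) ` {..length y}" for y :: "'a list"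
  have finL: "finite L" using fin L_def by auto
  have cov: "A \<subseteq> (\<Union>y\<in>L. P y)"
  proof
    fix x assume xA: "x \<in> A"
    define B where "B = {z\<in>A. \<exists>t. z = x@t}"
    have finB: "finite B" and xB: "x \<in> B" using fin xA B_def by auto
    have "Max (length ` B) \<in> length ` B" using finB xB by (intro Max_in) auto
    then obtain z where zB: "z \<in> B" and zl: "length z = Max (length ` B)" by auto
    have zmax: "\<forall>w\<in>B. length w \<le> length z" using finB zl by auto
    obtain t0 where zt0: "z = x@t0" using zB B_def by auto
    have zL: "z \<in> L"
    proof -
      have "w = z" if "w \<in> A" "w = z@t" for w t
      proof -
        have "w \<in> B" using that zt0 B_def by auto
        then have "length w \<le> length z" using zmax by auto
        then show ?thesis using that by simp
      qed
      then show ?thesis using zB B_def L_def by auto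
    qed
    have e1: "x = take (length x) z" using zt0 by simp
    have e2: "length x \<in> {..length z}" using zt0 by simp
    have "x \<in> P z" unfolding P_def using e1 e2 by (rule image_eqI)
    then show "x \<in> (\<Union>y\<in>L. P y)" using zL by auto
  qed
  have "card A \<le> card (\<Union>y\<in>L. P y)"
    by (rule card_mono[OF _ cov]) (auto simp: finL P_def)
  also have "\<dots> \<le> (\<Sum>y\<in>L. card (P y))" by (rule card_UN_le[OF finL])
  also have "\<dots> \<le> (\<Sum>y\<in>L. node_len y)"
  proof (rule sum_mono)
    fix y show "card (P y) \<le> node_len y"
      unfolding P_def node_len_def using card_image_le[of "{..length y}" "\<lambda>i. take i y"] by simp
  qed
  finally have "real (card A) \<le> (\<Sum>y\<in>L. real (node_len y))"
    by (metis of_nat_le_iff of_nat_sum)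
  also have "\<dots> \<le> (\<Sum>y\<in>L. c * \<pi> y)" by (rule sum_mono) (use h L_def in auto)
  also have "\<dots> = c * (\<Sum>y\<in>L. \<pi> y)" by (simp add: sum_distrib_left)
  also have "\<dots> \<le> c * 1"
  proof (rule mult_left_mono[OF _ c0], rule antichain[OF finL])
    show "\<forall>y\<in>L. \<forall>z\<in>L. (\<exists>t. z = y @ t) \<longrightarrow> z = y" using L_def by auto
  qed
  finally show ?thesis by simp
qed

lemma st_ext: "st y = st x \<Longrightarrow> st (y@s) = st (x@s)" by (simp add: st_app)

lemma dm_refl: "0 < \<pi> x \<Longrightarrow> dm x x" by (simp add: dm_def)

lemma dm_trans:
  assumes zy: "dm z y" and yx: "dm y x" shows "dm z x"
proof -
  have p: "0 < \<pi> x" "\<pi> x \<le> \<pi> y" "\<pi> y \<le> \<pi> z" "st z = st x"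
    using zy yx by (auto simp: dm_def)
  have h1: "real (node_len z) * \<pi> y \<le> real (node_len y) * \<pi> z" using zy by (simp add: dm_def)
  have h2: "real (node_len y) * \<pi> x \<le> real (node_len x) * \<pi> y" using yx by (simp add: dm_def)
  have "\<pi> y * (real (node_len z) * \<pi> x) = (real (node_len z) * \<pi> y) * \<pi> x" by (simp add: algebra_simps)
  also have "\<dots> \<le> (real (node_len y) * \<pi> z) * \<pi> x" using h1 p by (intro mult_right_mono) auto
  also have "\<dots> = (real (node_len y) * \<pi> x) * \<pi> z" by (simp add: algebra_simps)
  also have "\<dots> \<le> (real (node_len x) * \<pi> y) * \<pi> z" using h2 p by (intro mult_right_mono) auto
  also have "\<dots> = \<pi> y * (real (node_len x) * \<pi> z)" by (simp add: algebra_simps)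
  finally have "real (node_len z) * \<pi> x \<le> real (node_len x) * \<pi> z"
    using p by (simp add: mult_le_cancel_left_pos)
  then show ?thesis using p by (auto simp: dm_def)
qed

lemma dm_step:
  assumes mk: mk and d: "dm y x" and pos: "0 < \<pi> (x@[a])"
  shows "dm (y@[a]) (x@[a])"
proof -
  have sx: "st y = st x" and px: "0 < \<pi> x" and pxy: "\<pi> x \<le> \<pi> y"
    and h: "real (node_len y) * \<pi> x \<le> real (node_len x) * \<pi> y" using d by (auto simp: dm_def)
  have py: "0 < \<pi> y" using px pxy by simp
  have "cond_pol \<pi> a y = cond_pol \<pi> a x" using mk sx unfolding markovian_def by blast
  then have cq: "\<pi> (y@[a]) / \<pi> y = \<pi> (x@[a]) / \<pi> x" by (simp add: cond_pol_def)
  define r where "r = \<pi> (x@[a]) / \<pi> x"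
  have rx: "\<pi> (x@[a]) = r * \<pi> x" using px r_def by simp
  have ry: "\<pi> (y@[a]) = r * \<pi> y" using py cq r_def by (simp add: divide_eq_eq)
  have r0: "0 < r" using pos px r_def by simp
  have l: "node_len (y@[a]) = node_len y + 1" "node_len (x@[a]) = node_len x + 1"
    by (simp_all add: node_len_def)
  have "(real (node_len y) + 1) * \<pi> x \<le> (real (node_len x) + 1) * \<pi> y"
    using h pxy by (simp add: algebra_simps)
  then have "r * ((real (node_len y) + 1) * \<pi> x) \<le> r * ((real (node_len x) + 1) * \<pi> y)"
    using r0 by (simp add: mult_le_cancel_left_pos)
  then have "real (node_len (y@[a])) * \<pi> (x@[a]) \<le> real (node_len (x@[a])) * \<pi> (y@[a])"
    unfolding l rx ry by (simp add: algebra_simps)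
  moreover have "\<pi> (x@[a]) \<le> \<pi> (y@[a])" unfolding rx ry using r0 pxy by simp
  moreover have "st (y@[a]) = st (x@[a])" using sx by (rule st_ext)
  ultimately show ?thesis using pos by (simp add: dm_def)
qed

lemma dm_ext: "mk \<Longrightarrow> dm y x \<Longrightarrow> 0 < \<pi> (x@s) \<Longrightarrow> dm (y@s) (x@s)"
proof (induction s arbitrary: x y)
  case Nil then show ?case by simp
next
  case (Cons a s)
  have "\<pi> ((x@[a])@s) \<le> \<pi> (x@[a])" by (rule pmono)
  then have "0 < \<pi> (x@[a])" using Cons.prems by simp
  then have "dm (y@[a]) (x@[a])" using dm_step Cons.prems by blast
  moreover have "0 < \<pi> ((x@[a])@s)" using Cons.prems by simp
  ultimately have "dm ((y@[a])@s) ((x@[a])@s)" using Cons.IH Cons.prems(1) by blast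
  then show ?case by simp
qed

lemma cost_pos: "0 < \<pi> x \<Longrightarrow> cost x = ereal (real (node_len x) / \<pi> x)"
  by (simp add: levin_cost_def)

lemma cost_child: "cost x \<le> cost (x@[a])"
proof (cases "\<pi> (x@[a]) = 0")
  case True then show ?thesis by (simp add: levin_cost_def)
next
  case False
  then have p1: "0 < \<pi> (x@[a])" using pnn[of "x@[a]"] by simp
  have p2: "\<pi> (x@[a]) \<le> \<pi> x" by (rule pchild)
  have "real (node_len x) / \<pi> x \<le> real (node_len (x@[a])) / \<pi> (x@[a])"
    by (rule frac_le) (use p1 p2 in \<open>auto simp: node_len_def\<close>)
  then show ?thesis using p1 p2 by (simp add: cost_pos)
qed

lemma cost_dm:
  assumes d: "dm (m@s) g" shows "cost m \<le> cost g"
proof -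
  have pg: "0 < \<pi> g" and pms: "\<pi> g \<le> \<pi> (m@s)"
    and h: "real (node_len (m@s)) * \<pi> g \<le> real (node_len g) * \<pi> (m@s)"
    using d by (auto simp: dm_def)
  have pm: "\<pi> (m@s) \<le> \<pi> m" by (rule pmono)
  have p1: "0 < \<pi> (m@s)" using pg pms by simp
  have "real (node_len m) / \<pi> m \<le> real (node_len (m@s)) / \<pi> (m@s)"
    by (rule frac_le) (use p1 pm in \<open>auto simp: node_len_def\<close>)
  also have "\<dots> \<le> real (node_len g) / \<pi> g"
    using h p1 pg by (simp add: divide_le_eq le_divide_eq mult.commute)
  finally show ?thesis using p1 pm pg by (simp add: cost_pos)
qed

lemma cost_real: "cost y \<le> ereal c \<Longrightarrow> 0 < \<pi> y \<and> real (node_len y) \<le> c * \<pi> y"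
proof -
  assume a: "cost y \<le> ereal c"
  have "\<pi> y \<noteq> 0" using a by (auto simp: levin_cost_def)
  then have p: "0 < \<pi> y" using pnn[of y] by simp
  then have "real (node_len y) / \<pi> y \<le> c" using a by (simp add: cost_pos)
  then show ?thesis using p by (simp add: divide_le_eq)
qed

lemma cost_cross:
  assumes "0 < \<pi> x" "0 < \<pi> y" "cost y \<le> cost x"
  shows "real (node_len y) * \<pi> x \<le> real (node_len x) * \<pi> y"
proof -
  have "real (node_len y) / \<pi> y \<le> real (node_len x) / \<pi> x" using assms by (simp add: cost_pos)
  then show ?thesis using assms by (simp add: divide_le_eq le_divide_eq mult.commute)
qed

lemma cover:
  assumes P1: "\<forall>x\<in>E. \<forall>a. x@[a] \<in> F \<union> S"
    and P2: "\<forall>x\<in>S-E. 0 < \<pi> x \<longrightarrow> mk \<and> (\<exists>n\<in>E. dm n x)"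
    and NG: "\<forall>y\<in>S. st y \<notin> G"
  shows "x \<in> F \<union> S \<Longrightarrow> st (x@s) \<in> G \<Longrightarrow> 0 < \<pi> (x@s) \<Longrightarrow> \<exists>m\<in>F. \<exists>s'. dm (m@s') (x@s)"
proof (induction s arbitrary: x)
  case Nil
  then have "x \<in> F" using NG by auto
  then show ?case using Nil dm_refl[of x] by (metis append_Nil2)
next
  case (Cons a s)
  show ?case
  proof (cases "x \<in> F")
    case True then show ?thesis using Cons.prems dm_refl by blast
  next
    case False
    then have xS: "x \<in> S" using Cons.prems by auto
    show ?thesis
    proof (cases "x \<in> E")
      case True
      then have "x@[a] \<in> F \<union> S" using P1 by blast
      then show ?thesis using Cons.IH[of "x@[a]"] Cons.prems by simp
    next
      case False
      have "\<pi> (x@(a#s)) \<le> \<pi> x" by (rule pmono)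
      then have "0 < \<pi> x" using Cons.prems by simp
      then obtain n where mk: mk and nE: "n \<in> E" and dn: "dm n x" using P2 xS False by blast
      have d1: "dm (n@(a#s)) (x@(a#s))" using dm_ext[OF mk dn] Cons.prems by blast
      have "st (n@(a#s)) = st (x@(a#s))" and "\<pi> (x@(a#s)) \<le> \<pi> (n@(a#s))"
        using d1 by (auto simp: dm_def)
      then have g1: "st ((n@[a])@s) \<in> G" "0 < \<pi> ((n@[a])@s)" using Cons.prems by auto
      have "n@[a] \<in> F \<union> S" using P1 nE by blast
      then obtain m s' where "m \<in> F" "dm (m@s') ((n@[a])@s)" using Cons.IH[OF _ g1] by blast
      then show ?thesis using d1 dm_trans[of _ "n@(a#s)" "x@(a#s)"] by auto
    qed
  qed
qed

definition inv where
  "inv F V k \<longleftrightarrow> finite F \<and> (\<exists>S E. E \<subseteq> S \<and> finite S \<and> card S = k \<and> (\<forall>y\<in>S. st y \<notin> G)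
     \<and> (\<forall>x\<in>E. \<forall>a. x@[a] \<in> F \<union> S)
     \<and> (\<forall>x\<in>S-E. 0 < \<pi> x \<longrightarrow> mk \<and> (\<exists>n\<in>E. dm n x))
     \<and> (\<forall>y\<in>S. \<forall>m\<in>F. cost y \<le> cost m)
     \<and> V = (if mk then E else {}) \<and> F \<inter> S = {}
     \<and> (\<forall>y\<in>F \<union> S. y \<noteq> [] \<longrightarrow> butlast y \<in> E) \<and> [] \<in> F \<union> S)"

lemma sel_good:
  assumes I: "inv F V k" and gG: "st g \<in> G" and pg: "0 < \<pi> g"
  shows "F \<noteq> {} \<and> sel k F \<in> F \<and> cost (sel k F) \<le> cost g
         \<and> real (Suc k) \<le> real (node_len g) / \<pi> g"
proof -
  from I obtain S E where finF: "finite F" and ES: "E \<subseteq> S" and finS: "finite S" and cS: "card S = k"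
    and NG: "\<forall>y\<in>S. st y \<notin> G" and P1: "\<forall>x\<in>E. \<forall>a. x@[a] \<in> F \<union> S"
    and P2: "\<forall>x\<in>S-E. 0 < \<pi> x \<longrightarrow> mk \<and> (\<exists>n\<in>E. dm n x)"
    and P3: "\<forall>y\<in>S. \<forall>m\<in>F. cost y \<le> cost m" and FS: "F \<inter> S = {}"
    and root: "[] \<in> F \<union> S"
    unfolding inv_def by blast
  have "\<exists>m\<in>F. \<exists>s'. dm (m@s') ([]@g)"
    by (rule cover[OF P1 P2 NG root]) (use gG pg in auto)
  then obtain m s' where mF: "m \<in> F" and dmg: "dm (m@s') g" by auto
  have cm: "cost m \<le> cost g" using dmg by (rule cost_dm)
  have Fne: "F \<noteq> {}" using mF by auto
  have xF: "sel k F \<in> F" and xmin: "\<forall>m\<in>F. cost (sel k F) \<le> cost m"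
    using vc finF Fne unfolding valid_choice_def by blast+
  have cx: "cost (sel k F) \<le> cost g" using xmin mF cm by (meson order_trans)
  define c where "c = real (node_len g) / \<pi> g"
  have cg: "cost g = ereal c" using pg c_def by (simp add: cost_pos)
  have c0: "0 \<le> c" using pg c_def by simp
  define A where "A = insert (sel k F) S"
  have xnS: "sel k F \<notin> S" using xF FS by auto
  have cA: "card A = Suc k" using xnS finS cS A_def by simp
  have "\<forall>y\<in>A. real (node_len y) \<le> c * \<pi> y"
  proof
    fix y assume "y \<in> A"
    then have "cost y \<le> cost g"
      using cx P3 mF cm A_def by (auto intro: order_trans)
    then show "real (node_len y) \<le> c * \<pi> y" using cg cost_real by auto
  qed
  then have "real (card A) \<le> c" using counting[of A c] finS A_def c0 by auto
  then show ?thesis using Fne xF cx cA c_def by simp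
qed

lemma step:
  assumes I: "inv F V k" and gG: "st g \<in> G" and pg: "0 < \<pi> g"
    and st: "levin_step T s0 G \<pi> sel k (F, V, False) = (F', V', stp)" and ns: "\<not> stp"
  shows "inv F' V' (Suc k)"
proof -
  from I obtain S E where finF: "finite F" and ES: "E \<subseteq> S" and finS: "finite S" and cS: "card S = k"
    and NG: "\<forall>y\<in>S. st y \<notin> G" and P1: "\<forall>x\<in>E. \<forall>a. x@[a] \<in> F \<union> S"
    and P2: "\<forall>x\<in>S-E. 0 < \<pi> x \<longrightarrow> mk \<and> (\<exists>n\<in>E. dm n x)"
    and P3: "\<forall>y\<in>S. \<forall>m\<in>F. cost y \<le> cost m" and VE: "V = (if mk then E else {})"
    and FS: "F \<inter> S = {}"
    and P4: "\<forall>y\<in>F \<union> S. y \<noteq> [] \<longrightarrow> butlast y \<in> E" and root: "[] \<in> F \<union> S"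
    unfolding inv_def by blast
  have sg: "F \<noteq> {}" "sel k F \<in> F" using sel_good[OF I gG pg] by auto
  define x where "x = sel k F"
  have xF: "x \<in> F" using sg x_def by simp
  have xmin: "\<forall>m\<in>F. cost x \<le> cost m"
    using vc finF sg unfolding valid_choice_def x_def by blast
  have xS: "x \<notin> S" using xF FS by auto
  have xE: "x \<notin> E" using xS ES by auto
  have xG: "st x \<notin> G"
  proof
    assume "st x \<in> G"
    then have "stp" using st sg unfolding levin_step_def x_def by (auto simp: Let_def)
    then show False using ns by simp
  qed
  have cardS': "card (insert x S) = Suc k" using xS finS cS by simp
  have stepeq: "levin_step T s0 G \<pi> sel k (F, V, False) =
     (if mk \<and> (\<exists>n'\<in>V. st n' = st x \<and> \<pi> x \<le> \<pi> n') then (F - {x}, V, False)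
      else ((F - {x}) \<union> {x @ [a] |a. True}, (if mk then V \<union> {x} else V), False))"
    using sg xG unfolding levin_step_def x_def by (simp add: Let_def)
  show ?thesis
  proof (cases "mk \<and> (\<exists>n'\<in>V. st n' = st x \<and> \<pi> x \<le> \<pi> n')")
    case True
    have "(F', V', stp) = (F - {x}, V, False)"
      unfolding st[symmetric] stepeq if_P[OF True] ..
    then have eqs: "F' = F - {x}" "V' = V" by simp_all
    have P2': "\<forall>z\<in>insert x S - E. 0 < \<pi> z \<longrightarrow> mk \<and> (\<exists>n\<in>E. dm n z)"
    proof
      fix z assume z: "z \<in> insert x S - E"
      show "0 < \<pi> z \<longrightarrow> mk \<and> (\<exists>n\<in>E. dm n z)"
      proof (cases "z = x")
        case False then show ?thesis using z P2 by auto
      next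
        case True
        show ?thesis
        proof
          assume pz: "0 < \<pi> z"
          obtain n' where n'V: "n' \<in> V" and sn: "st n' = st x" and pn: "\<pi> x \<le> \<pi> n'"
            using \<open>mk \<and> _\<close> by blast
          have n'E: "n' \<in> E" using n'V VE True \<open>mk \<and> _\<close> by (auto split: if_splits)
          have "cost n' \<le> cost x" using P3 n'E ES xF by blast
          then have "real (node_len n') * \<pi> x \<le> real (node_len x) * \<pi> n'"
            using pz pn True by (intro cost_cross) auto
          then have "dm n' x" using sn pn pz True by (simp add: dm_def)
          then show "mk \<and> (\<exists>n\<in>E. dm n z)" using n'E True \<open>mk \<and> _\<close> by blast
        qed
      qed
    qed
    have P3': "\<forall>y\<in>insert x S. \<forall>m\<in>F - {x}. cost y \<le> cost m" using P3 xmin by auto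
    show ?thesis unfolding inv_def eqs
    proof (rule conjI[rotated], rule exI[where x="insert x S"], rule exI[where x=E], intro conjI)
      show "finite (F - {x})" using finF by simp
      show "E \<subseteq> insert x S" using ES by auto
      show "finite (insert x S)" using finS by simp
      show "card (insert x S) = Suc k" by (rule cardS')
      show "\<forall>y\<in>insert x S. st y \<notin> G" using NG xG by auto
      show "\<forall>z\<in>E. \<forall>a. z@[a] \<in> (F - {x}) \<union> insert x S" using P1 by auto
      show "\<forall>z\<in>insert x S - E. 0 < \<pi> z \<longrightarrow> mk \<and> (\<exists>n\<in>E. dm n z)" by (rule P2')
      show "\<forall>y\<in>insert x S. \<forall>m\<in>F - {x}. cost y \<le> cost m" by (rule P3')
      show "V = (if mk then E else {})" by (rule VE)
      show "(F - {x}) \<inter> insert x S = {}" using FS by auto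
      show "\<forall>y\<in>(F - {x}) \<union> insert x S. y \<noteq> [] \<longrightarrow> butlast y \<in> E" using P4 xF by auto
      show "[] \<in> (F - {x}) \<union> insert x S" using root by auto
    qed
  next
    case False
    have "(F', V', stp) = ((F - {x}) \<union> {x @ [a] |a. True}, (if mk then V \<union> {x} else V), False)"
      unfolding st[symmetric] stepeq if_not_P[OF False] ..
    then have eqs: "F' = (F - {x}) \<union> {x @ [a] |a. True}" "V' = (if mk then V \<union> {x} else V)" by simp_all
    define F2 where "F2 = (F - {x}) \<union> {x @ [a] |a. True}"
    have finch: "finite {x @ [a] |a. True}"
    proof -
      have "{x @ [a] |a. True} = (\<lambda>a. x@[a]) ` UNIV" by auto
      then show ?thesis by simp
    qed
    have P3': "\<forall>y\<in>insert x S. \<forall>m\<in>F2. cost y \<le> cost m"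
    proof (intro ballI)
      fix y m assume y: "y \<in> insert x S" and m: "m \<in> F2"
      have yx: "cost y \<le> cost x" using y P3 xF by auto
      show "cost y \<le> cost m"
      proof (cases "m \<in> F - {x}")
        case True then show ?thesis using y P3 xmin by auto
      next
        case False
        then obtain a where "m = x@[a]" using m F2_def by auto
        then show ?thesis using yx cost_child[of x a] by auto
      qed
    qed
    have disj: "F2 \<inter> insert x S = {}"
    proof -
      have "x@[a] \<notin> S" for a
      proof
        assume "x@[a] \<in> S"
        then have "butlast (x@[a]) \<in> E" using P4 by blast
        then show False using xE by simp
      qed
      moreover have "x@[a] \<noteq> x" for a by simp
      ultimately show ?thesis using FS F2_def by auto
    qed
    show ?thesis unfolding inv_def eqs F2_def[symmetric]
    proof (rule conjI[rotated], rule exI[where x="insert x S"], rule exI[where x="insert x E"], intro conjI)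
      show "finite F2" using finF finch F2_def by simp
      show "insert x E \<subseteq> insert x S" using ES by auto
      show "finite (insert x S)" using finS by simp
      show "card (insert x S) = Suc k" by (rule cardS')
      show "\<forall>y\<in>insert x S. st y \<notin> G" using NG xG by auto
      show "\<forall>z\<in>insert x E. \<forall>a. z@[a] \<in> F2 \<union> insert x S" using P1 F2_def by auto
      show "\<forall>z\<in>insert x S - insert x E. 0 < \<pi> z \<longrightarrow> mk \<and> (\<exists>n\<in>insert x E. dm n z)"
        using P2 by blast
      show "\<forall>y\<in>insert x S. \<forall>m\<in>F2. cost y \<le> cost m" by (rule P3')
      show "(if mk then V \<union> {x} else V) = (if mk then insert x E else {})" using VE by auto
      show "F2 \<inter> insert x S = {}" by (rule disj)
      show "\<forall>y\<in>F2 \<union> insert x S. y \<noteq> [] \<longrightarrow> butlast y \<in> insert x E" using P4 F2_def xF by auto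
      show "[] \<in> F2 \<union> insert x S" using root F2_def by auto
    qed
  qed
qed

abbreviation run where "run k \<equiv> levin_run T s0 G \<pi> sel k"

lemma stop_persist: "snd (snd (run k)) \<Longrightarrow> snd (snd (run (Suc k)))"
  by (cases "run k") (auto simp: levin_step_def)

lemma run_inv:
  assumes gG: "st g \<in> G" and pg: "0 < \<pi> g"
  shows "\<not> snd (snd (run k)) \<Longrightarrow> inv (fst (run k)) (fst (snd (run k))) k"
proof (induction k)
  case 0
  show ?case unfolding inv_def
    by (rule conjI[rotated], rule exI[where x="{}"], rule exI[where x="{}"]) auto
next
  case (Suc k)
  have ns: "\<not> snd (snd (run k))" using Suc.prems stop_persist by blast
  obtain F V where rk: "run k = (F, V, False)" using ns by (cases "run k") auto
  have I: "inv F V k" using Suc.IH ns rk by simp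
  obtain F' V' stp where r2: "levin_step T s0 G \<pi> sel k (F, V, False) = (F', V', stp)"
    by (cases "levin_step T s0 G \<pi> sel k (F, V, False)") auto
  have rs: "run (Suc k) = (F', V', stp)" using r2 rk by simp
  have "\<not> stp" using Suc.prems rs by simp
  then have "inv F' V' (Suc k)" using step[OF I gG pg r2] by blast
  then show ?case using rs by simp
qed

lemma main_g:
  assumes gG: "st g \<in> G"
  shows "levin_N T s0 G \<pi> sel \<le> cost g"
proof (cases "\<pi> g = 0")
  case True then show ?thesis by (simp add: levin_cost_def)
next
  case False
  then have pg: "0 < \<pi> g" using pnn[of g] by simp
  define c where "c = real (node_len g) / \<pi> g"
  have bound: "\<not> snd (snd (run k)) \<Longrightarrow> real (Suc k) \<le> c" for k
    using sel_good[OF run_inv[OF gG pg] gG pg] c_def by blast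
  define k0 where "k0 = nat \<lceil>c\<rceil>"
  have "c \<le> real k0" unfolding k0_def by linarith
  then have ex: "snd (snd (run k0))" using bound[of k0] by linarith
  define K where "K = (LEAST k. snd (snd (run k)))"
  have sK: "snd (snd (run K))" using ex K_def by (metis LeastI)
  have "K \<noteq> 0" using sK by (intro notI) simp
  then obtain j where Kj: "K = Suc j" by (cases K) auto
  have "\<not> snd (snd (run j))" using not_less_Least[of j "\<lambda>k. snd (snd (run k))"] K_def Kj by simp
  then have "real K \<le> c" using bound Kj by simp
  moreover have "levin_N T s0 G \<pi> sel = ereal (real K)"
    unfolding levin_N_def K_def using ex by auto
  ultimately show ?thesis using pg c_def by (simp add: cost_pos)
qed

end

theorem theorem3:
  fixes T :: "'s \<Rightarrow> 'a::finite \<Rightarrow> 's" and s0 :: 's and G :: "'s set"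
    and \<pi> :: "'a list \<Rightarrow> real" and sel :: "nat \<Rightarrow> 'a list set \<Rightarrow> 'a list"
  assumes "is_policy \<pi>"
    and "valid_choice \<pi> sel"
  shows "levin_N T s0 G \<pi> sel
           \<le> (INF n\<in>{n. node_state T s0 n \<in> G}. levin_cost \<pi> n)"
proof -
  interpret lts T s0 G \<pi> sel using assms by unfold_locales
  show ?thesis by (rule INF_greatest) (use main_g in auto)
qed

end
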